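(* Let $X$ be a compact metric countable space and $f:X\to X$ a continuous function such that $(X,f)$ is transitive. If there is $m\in\mathbb N$ such that $|\omega_f(x)|\le m$ for every accumulation point $x$ of $X$, then the Ellis semigroup $E(X,f)$ is countable.
   Context: $(X,f)$ is transitive if some point has dense orbit $\{f^n(x):n\in\mathbb N\}$. The Ellis semigroup $E(X,f)$ is the closure of $\{f^n:n\in\mathbb N\}$ in $X^X$ with the product (pointwise) topology. The $\omega$-limit set $\omega_f(x)$ is the set of $y$ with $f^{n_k}(x)\to y$ for some strictly increasing sequence $(n_k)$. An accumulation point is a non-isolated point. *)

theory Defs
  imports "HOL-Analysis.Analysis"
begin

definition transitive_system :: "'a::topological_space set \<Rightarrow> ('a \<Rightarrow> 'a) \<Rightarrow> bool" where
  "transitive_system X f \<longleftrightarrow> (\<exists>x\<in>X. closure {(f ^^ n) x | n. True} = closure X)"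

definition omega_limit :: "('a::topological_space \<Rightarrow> 'a) \<Rightarrow> 'a \<Rightarrow> 'a set" where
  "omega_limit f x = {y. \<exists>r. strict_mono r \<and> (\<lambda>k. (f ^^ (r k)) x) \<longlonglongrightarrow> y}"

definition ellis_semigroup :: "'a::topological_space set \<Rightarrow> ('a \<Rightarrow> 'a) \<Rightarrow> ('a \<Rightarrow> 'a) set" where
  "ellis_semigroup X f =
     (product_topology (\<lambda>_. top_of_set X) X) closure_of {restrict (f ^^ n) X | n. True}"

end

theory Submission
  imports Defs
begin

lemma funpow_period:
  fixes \<phi> :: "'a \<Rightarrow> 'a"
  assumes "finite W" "card W \<le> m" "\<phi> ` W \<subseteq> W" "w \<in> W" "n \<ge> m"
  shows "(\<phi> ^^ (n + fact m)) w = (\<phi> ^^ n) w"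
proof -
  have inW: "(\<phi> ^^ j) w \<in> W" for j
    by (induction j) (use assms in auto)
  have "\<not> inj_on (\<lambda>j. (\<phi> ^^ j) w) {0..m}"
  proof
    assume "inj_on (\<lambda>j. (\<phi> ^^ j) w) {0..m}"
    then have "card {0..m} \<le> card W"
      using card_inj_on_le[of "\<lambda>j. (\<phi> ^^ j) w" "{0..m}" W] inW assms(1) by blast
    then show False using assms(2) by simp
  qed
  then obtain i j where ij: "i \<le> m" "j \<le> m" "i < j" "(\<phi> ^^ i) w = (\<phi> ^^ j) w"
    unfolding inj_on_def by (metis atLeastAtMost_iff linorder_neqE_nat)
  define q where "q = j - i"
  have q: "1 \<le> q" "q \<le> m" using ij by (auto simp: q_def)
  have step: "(\<phi> ^^ (n' + q)) w = (\<phi> ^^ n') w" if "n' \<ge> i" for n'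
  proof -
    have e: "n' + q = (n' - i) + j" using that ij by (simp add: q_def)
    have "(\<phi> ^^ (n' + q)) w = (\<phi> ^^ (n' - i)) ((\<phi> ^^ j) w)"
      unfolding e funpow_add by simp
    also have "\<dots> = (\<phi> ^^ (n' - i)) ((\<phi> ^^ i) w)" using ij by simp
    also have "\<dots> = (\<phi> ^^ ((n' - i) + i)) w" unfolding funpow_add by simp
    also have "\<dots> = (\<phi> ^^ n') w" using that by simp
    finally show ?thesis .
  qed
  have multi: "(\<phi> ^^ (n + q * t)) w = (\<phi> ^^ n) w" for t
  proof (induction t)
    case 0 then show ?case by simp
  next
    case (Suc t)
    have "(\<phi> ^^ (n + q * Suc t)) w = (\<phi> ^^ ((n + q * t) + q)) w" by (simp add: algebra_simps)
    also have "\<dots> = (\<phi> ^^ (n + q * t)) w" using step[of "n + q*t"] ij assms(5) by simp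
    finally show ?case using Suc by simp
  qed
  obtain t where "fact m = q * t" using dvd_fact[OF q] by (metis dvdE)
  then show ?thesis using multi[of t] by simp
qed

lemma orbit_in:
  assumes "f ` X \<subseteq> X" "z \<in> X" shows "(f ^^ n) z \<in> X"
  by (induction n) (use assms in auto)

lemma funpow_cont:
  assumes "f ` X \<subseteq> X" "continuous_on X f" shows "continuous_on X (f ^^ n)"
proof (induction n)
  case 0 then show ?case by (simp add: continuous_on_id)
next
  case (Suc n)
  have "(f ^^ Suc n) = f \<circ> (f ^^ n)" by simp
  moreover have "(f ^^ n) ` X \<subseteq> X" using orbit_in[OF assms(1)] by blast
  ultimately show ?case using continuous_on_compose continuous_on_subset Suc assms(2)
    by metis
qed

lemma omega_sub:
  fixes X :: "'a::metric_space set"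
  assumes "compact X" "f ` X \<subseteq> X" "z \<in> X"
  shows "omega_limit f z \<subseteq> X"
proof
  fix y assume "y \<in> omega_limit f z"
  then obtain r where "strict_mono r" "(\<lambda>k. (f ^^ (r k)) z) \<longlonglongrightarrow> y"
    unfolding omega_limit_def by blast
  moreover have "closed X" using assms(1) compact_imp_closed by blast
  ultimately show "y \<in> X" using closed_sequentially orbit_in[OF assms(2,3)] by metis
qed

lemma omega_inv:
  fixes X :: "'a::metric_space set"
  assumes "compact X" "f ` X \<subseteq> X" "continuous_on X f" "z \<in> X"
  shows "f ` omega_limit f z \<subseteq> omega_limit f z"
proof
  fix u assume "u \<in> f ` omega_limit f z"
  then obtain y where y: "y \<in> omega_limit f z" "u = f y" by blast
  then obtain r where r: "strict_mono r" "(\<lambda>k. (f ^^ (r k)) z) \<longlonglongrightarrow> y"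
    unfolding omega_limit_def by blast
  have "y \<in> X" using omega_sub[OF assms(1,2,4)] y by blast
  then have "(\<lambda>k. f ((f ^^ (r k)) z)) \<longlonglongrightarrow> f y"
    using continuous_on_tendsto_compose[OF assms(3) r(2)] orbit_in[OF assms(2,4)] by simp
  moreover have "strict_mono (\<lambda>k. Suc (r k))" using r(1) by (simp add: strict_mono_def)
  ultimately show "u \<in> omega_limit f z" unfolding omega_limit_def using y by auto
qed

lemma omega_near:
  fixes X :: "'a::metric_space set"
  assumes "compact X" "f ` X \<subseteq> X" "z \<in> X" "\<eta> > 0"
  shows "\<exists>N. \<forall>n\<ge>N. \<exists>w\<in>omega_limit f z. dist ((f ^^ n) z) w < \<eta>"
proof (rule ccontr)
  assume H: "\<not> ?thesis"
  define S where "S = {n. \<forall>w\<in>omega_limit f z. \<eta> \<le> dist ((f ^^ n) z) w}"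
  have "infinite S" unfolding infinite_nat_iff_unbounded_le S_def using H by (auto simp: not_less)
  define r1 where "r1 = enumerate S"
  have r1: "strict_mono r1" "\<And>k. r1 k \<in> S"
    using \<open>infinite S\<close> enumerate_mono enumerate_in_set unfolding r1_def strict_mono_def by blast+
  have "seq_compact X" using assms(1) compact_imp_seq_compact by blast
  then obtain l r2 where l: "l \<in> X" "strict_mono r2"
    "((\<lambda>k. (f ^^ (r1 k)) z) \<circ> r2) \<longlonglongrightarrow> l"
    unfolding seq_compact_def using orbit_in[OF assms(2,3)] by metis
  have "strict_mono (r1 \<circ> r2)" using r1(1) l(2) strict_mono_o by blast
  then have lw: "l \<in> omega_limit f z" unfolding omega_limit_def using l(3)
    by (auto simp: o_def)
  obtain k where "dist (((\<lambda>k. (f ^^ (r1 k)) z) \<circ> r2) k) l < \<eta>"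
    using tendstoD[OF l(3) assms(4)] eventually_sequentially by (metis order_refl)
  moreover have "r1 (r2 k) \<in> S" using r1 by blast
  ultimately show False using lw unfolding S_def by auto
qed

lemma finite_sep:
  fixes W :: "'a::metric_space set"
  assumes "finite W"
  shows "\<exists>\<delta>>0. \<forall>u\<in>W. \<forall>v\<in>W. dist u v < 2*\<delta> \<longrightarrow> u = v"
proof -
  define D where "D = (\<lambda>(u,v). dist u v) ` {p \<in> W \<times> W. fst p \<noteq> snd p}"
  have fD: "finite (insert 1 D)" using assms unfolding D_def by auto
  have pos: "\<forall>d\<in>insert 1 D. d > 0" unfolding D_def by auto
  define \<delta> where "\<delta> = Min (insert 1 D) / 2"
  have "Min (insert 1 D) > 0" using fD pos by (simp add: D_def)
  then have "\<delta> > 0" by (simp add: \<delta>_def)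
  moreover have "u = v" if "u \<in> W" "v \<in> W" "dist u v < 2*\<delta>" for u v
  proof (rule ccontr)
    assume "u \<noteq> v"
    then have "dist u v \<in> insert 1 D" unfolding D_def using that by force
    then have "Min (insert 1 D) \<le> dist u v" using fD by simp
    then show False using that(3) by (simp add: \<delta>_def)
  qed
  ultimately show ?thesis by blast
qed

lemma omega_conv:
  fixes X :: "'a::metric_space set"
  assumes X: "compact X" "f ` X \<subseteq> X" "continuous_on X f" "z \<in> X"
    and fin: "finite (omega_limit f z)" "card (omega_limit f z) \<le> m"
  shows "\<exists>l\<in>X. (\<lambda>k. (f ^^ (fact m * k)) z) \<longlonglongrightarrow> l"
proof -
  define W where "W = omega_limit f z"
  define L :: nat where "L = fact m"
  have L1: "L \<ge> 1" unfolding L_def by simp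
  have WX: "W \<subseteq> X" using omega_sub[OF X(1,2,4)] W_def by blast
  have fW: "f ` W \<subseteq> W" using omega_inv[OF X] W_def by blast
  obtain \<delta> where \<delta>: "\<delta> > 0" "\<forall>u\<in>W. \<forall>v\<in>W. dist u v < 2*\<delta> \<longrightarrow> u = v"
    using finite_sep[OF fin(1)] W_def by blast
  have uc: "uniformly_continuous_on X f" using compact_uniformly_continuous X by blast
  obtain \<eta>0 where \<eta>0: "\<eta>0 > 0" "\<forall>u\<in>X. \<forall>v\<in>X. dist v u < \<eta>0 \<longrightarrow> dist (f v) (f u) < \<delta>"
    using uc \<delta>(1) unfolding uniformly_continuous_on_def by metis
  have "Cauchy (\<lambda>k. (f ^^ (L * k)) z)"
  proof (rule metric_CauchyI)
    fix e :: real assume e: "e > 0"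
    define \<eta> where "\<eta> = min \<eta>0 (min \<delta> (e/2))"
    have \<eta>: "\<eta> > 0" "\<eta> \<le> \<eta>0" "\<eta> \<le> \<delta>" "\<eta> \<le> e/2" using \<eta>0 \<delta> e by (auto simp: \<eta>_def)
    obtain N where N: "\<forall>n\<ge>N. \<exists>w\<in>W. dist ((f ^^ n) z) w < \<eta>"
      using omega_near[OF X(1,2,4) \<eta>(1)] W_def by blast
    define w where "w n = (SOME w. w \<in> W \<and> dist ((f ^^ n) z) w < \<eta>)" for n
    have w: "w n \<in> W" "dist ((f ^^ n) z) (w n) < \<eta>" if "n \<ge> N" for n
      using someI_ex[of "\<lambda>w. w \<in> W \<and> dist ((f ^^ n) z) w < \<eta>"] N that
      unfolding w_def by blast+
    have wS: "w (Suc n) = f (w n)" if "n \<ge> N" for n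
    proof -
      have wnX: "w n \<in> X" using w[OF that] WX by blast
      have "dist ((f ^^ n) z) (w n) < \<eta>0" using w[OF that] \<eta> by simp
      then have a: "dist (f ((f ^^ n) z)) (f (w n)) < \<delta>"
        using \<eta>0(2) wnX orbit_in[OF X(2,4)] by blast
      have b: "dist ((f ^^ Suc n) z) (w (Suc n)) < \<delta>" using w[of "Suc n"] that \<eta> by simp
      have "dist (w (Suc n)) (f (w n)) < 2*\<delta>"
        using a b dist_triangle[of "w (Suc n)" "f (w n)" "(f ^^ Suc n) z"] by (simp add: dist_commute)
      moreover have "f (w n) \<in> W" using fW w[OF that] by blast
      ultimately show ?thesis using \<delta>(2) w[of "Suc n"] that by simp
    qed
    have wj: "w (N + j) = (f ^^ j) (w N)" for j
    proof (induction j)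
      case 0 then show ?case by simp
    next
      case (Suc j)
      have "w (N + Suc j) = w (Suc (N + j))" by simp
      also have "\<dots> = f (w (N + j))" by (rule wS) simp
      also have "\<dots> = (f ^^ Suc j) (w N)" using Suc by simp
      finally show ?case .
    qed
    have fW': "f ` omega_limit f z \<subseteq> omega_limit f z" using fW W_def by simp
    note Pper = funpow_period[OF fin(1) fin(2) fW']
    have wper: "w (n + L) = w n" if "n \<ge> N + m" for n
    proof -
      have e: "n + L = N + ((n - N) + fact m)" using that by (simp add: L_def)
      have "w (n + L) = (f ^^ ((n - N) + fact m)) (w N)" unfolding e by (rule wj)
      also have "\<dots> = (f ^^ (n - N)) (w N)"
      proof -
        have "w N \<in> omega_limit f z" using w[of N] W_def by simp
        moreover have "m \<le> n - N" using that by simp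
        ultimately show ?thesis
          using Pper by blast
      qed
      also have "\<dots> = w (N + (n - N))" by (rule wj[symmetric])
      also have "\<dots> = w n" using that by simp
      finally show ?thesis .
    qed
    define K where "K = N + m"
    have wK: "w (L * k) = w (L * K)" if "k \<ge> K" for k
      using that
    proof (induction k rule: dec_induct)
      case base then show ?case by simp
    next
      case (step k)
      have "k \<le> L * k" using L1 by simp
      then have "L * k \<ge> K" using step(1) by linarith
      then have "w (L * k + L) = w (L * k)" using wper[of "L * k"] unfolding K_def by blast
      moreover have "L * Suc k = L * k + L" by simp
      ultimately have "w (L * Suc k) = w (L * k)" by (simp add: add.commute)
      then show ?case using step(3) by simp
    qed
    have close: "dist ((f ^^ (L * k)) z) (w (L * K)) < e/2" if "k \<ge> K" for k
    proof -
      have "k \<le> L * k" using L1 by simp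
      then have "L * k \<ge> N" using that K_def by linarith
      then show ?thesis using w[of "L*k"] wK[OF that] \<eta> by simp
    qed
    show "\<exists>M. \<forall>m\<ge>M. \<forall>n\<ge>M. dist ((f ^^ (L * m)) z) ((f ^^ (L * n)) z) < e"
    proof (intro exI allI impI)
      fix a b assume "a \<ge> K" "b \<ge> K"
      from close[OF this(1)] close[OF this(2)] show "dist ((f ^^ (L * a)) z) ((f ^^ (L * b)) z) < e"
        by (rule dist_triangle_half_l)
    qed
  qed
  moreover have "complete X" using X(1) compact_imp_complete by blast
  moreover have "\<forall>k. (f ^^ (L * k)) z \<in> X" using orbit_in[OF X(2,4)] by blast
  ultimately obtain l where "l \<in> X" "(\<lambda>k. (f ^^ (L * k)) z) \<longlonglongrightarrow> l"
    unfolding complete_def by (metis (no_types, lifting))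
  then show ?thesis unfolding L_def by (intro bexI)
qed


lemma ellis_approx:
  fixes X :: "'a::metric_space set"
  assumes "p \<in> ellis_semigroup X f"
  shows "p \<in> PiE X (\<lambda>_. X)"
    and "\<And>F \<epsilon>. finite F \<Longrightarrow> F \<subseteq> X \<Longrightarrow> \<epsilon> > 0 \<Longrightarrow> \<exists>n. \<forall>z\<in>F. dist ((f ^^ n) z) (p z) < \<epsilon>"
proof -
  have cl: "p \<in> topspace (product_topology (\<lambda>_. top_of_set X) X) \<and>
    (\<forall>T. p \<in> T \<and> openin (product_topology (\<lambda>_. top_of_set X) X) T \<longrightarrow>
       (\<exists>y. y \<in> {restrict (f ^^ n) X | n. True} \<and> y \<in> T))"
    using assms unfolding ellis_semigroup_def in_closure_of by blast
  then show pP: "p \<in> PiE X (\<lambda>_. X)" by simp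
  fix F \<epsilon> assume F: "finite F" "F \<subseteq> X" and e: "(\<epsilon>::real) > 0"
  define S where "S z = (if z \<in> F then X \<inter> ball (p z) \<epsilon> else X)" for z
  have "{i \<in> X. S i \<noteq> topspace (top_of_set X)} \<subseteq> F" unfolding S_def by auto
  then have fin: "finite {i \<in> X. S i \<noteq> topspace (top_of_set X)}" using F(1) finite_subset by blast
  have op: "\<forall>i\<in>X. openin (top_of_set X) (S i)" unfolding S_def
    by (auto simp: openin_open_Int)
  have "openin (product_topology (\<lambda>_. top_of_set X) X) (PiE X S)"
    using fin op by (simp add: openin_PiE_gen)
  moreover have "p \<in> PiE X S" using pP F e unfolding S_def by (auto simp: PiE_iff)
  ultimately obtain y where y: "y \<in> {restrict (f ^^ n) X | n. True}" "y \<in> PiE X S" using cl by blast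
  then obtain n where n: "y = restrict (f ^^ n) X" by blast
  have "\<forall>z\<in>F. dist ((f ^^ n) z) (p z) < \<epsilon>"
  proof
    fix z assume z: "z \<in> F"
    then have "y z \<in> S z" using y(2) F(2) by (auto simp: PiE_iff)
    then show "dist ((f ^^ n) z) (p z) < \<epsilon>" using z F(2) n unfolding S_def
      by (auto simp: dist_commute)
  qed
  then show "\<exists>n. \<forall>z\<in>F. dist ((f ^^ n) z) (p z) < \<epsilon>" by blast
qed

lemma reduction:
  fixes X :: "'a::metric_space set"
  assumes approx: "\<And>F \<epsilon>. finite F \<Longrightarrow> F \<subseteq> X \<Longrightarrow> \<epsilon> > 0 \<Longrightarrow> \<exists>n. \<forall>z\<in>F. dist ((f ^^ n) z) (p z) < \<epsilon>"
    and ext: "p \<in> extensional X" and L: "(L::nat) > 0"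
  shows "(\<exists>n. p = restrict (f ^^ n) X) \<or>
    (\<exists>i<L. \<forall>N F \<epsilon>. finite F \<longrightarrow> F \<subseteq> X \<longrightarrow> \<epsilon> > 0 \<longrightarrow>
        (\<exists>n\<ge>N. n mod L = i \<and> (\<forall>z\<in>F. dist ((f ^^ n) z) (p z) < \<epsilon>)))"
proof (rule ccontr)
  assume H: "\<not> ?thesis"
  have "\<forall>n. \<exists>z. z \<in> X \<and> (f ^^ n) z \<noteq> p z"
  proof
    fix n
    have "p \<noteq> restrict (f ^^ n) X" using H by blast
    then show "\<exists>z. z \<in> X \<and> (f ^^ n) z \<noteq> p z" using ext
      by (metis (mono_tags, lifting) extensional_restrict restrict_ext)
  qed
  then obtain zz where zz: "\<And>n. zz n \<in> X" "\<And>n. (f ^^ n) (zz n) \<noteq> p (zz n)" by metis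
  have "\<forall>i. \<exists>N F \<epsilon>. i < L \<longrightarrow> (finite F \<and> F \<subseteq> X \<and> \<epsilon> > 0 \<and>
        \<not> (\<exists>n\<ge>N. n mod L = i \<and> (\<forall>z\<in>F. dist ((f ^^ n) z) (p z) < \<epsilon>)))"
    using H by blast
  then obtain NN FF EE where NFE: "\<And>i. i < L \<Longrightarrow> finite (FF i) \<and> FF i \<subseteq> X \<and> (EE i::real) > 0 \<and>
        \<not> (\<exists>n\<ge>NN i. n mod L = i \<and> (\<forall>z\<in>FF i. dist ((f ^^ n) z) (p z) < EE i))"
    by metis
  define N0 where "N0 = Max (NN ` {..<L})"
  define F0 where "F0 = (\<Union>i<L. FF i) \<union> zz ` {..<N0}"
  define D where "D = EE ` {..<L} \<union> (\<lambda>n. dist ((f ^^ n) (zz n)) (p (zz n))) ` {..<N0}"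
  define e0 where "e0 = Min D"
  have fD: "finite D" "D \<noteq> {}" unfolding D_def using L by auto
  have Dpos: "\<forall>d\<in>D. d > 0" unfolding D_def using NFE zz(2) by auto
  have e0: "e0 > 0" unfolding e0_def using fD Dpos by simp
  have F0: "finite F0" "F0 \<subseteq> X" unfolding F0_def using NFE zz(1) by auto
  obtain n where n: "\<forall>z\<in>F0. dist ((f ^^ n) z) (p z) < e0" using approx[OF F0 e0] by blast
  show False
  proof (cases "n < N0")
    case True
    then have "zz n \<in> F0" unfolding F0_def by blast
    then have "dist ((f ^^ n) (zz n)) (p (zz n)) < e0" using n by blast
    moreover have "e0 \<le> dist ((f ^^ n) (zz n)) (p (zz n))"
      unfolding e0_def using fD True by (intro Min_le) (auto simp: D_def)
    ultimately show False by simp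
  next
    case False
    define i where "i = n mod L"
    have i: "i < L" unfolding i_def using L by simp
    have "NN i \<le> N0" unfolding N0_def using i by (intro Max_ge) auto
    then have "n \<ge> NN i" using False by simp
    moreover have "\<forall>z\<in>FF i. dist ((f ^^ n) z) (p z) < EE i"
    proof
      fix z assume "z \<in> FF i"
      then have "z \<in> F0" unfolding F0_def using i by blast
      moreover have "e0 \<le> EE i" unfolding e0_def using fD i by (intro Min_le) (auto simp: D_def)
      ultimately show "dist ((f ^^ n) z) (p z) < EE i" using n by force
    qed
    ultimately show False using NFE[OF i] i_def by blast
  qed
qed

lemma commute_orbit:
  fixes X :: "'a::metric_space set"
  assumes approx: "\<And>F \<epsilon>. finite F \<Longrightarrow> F \<subseteq> X \<Longrightarrow> \<epsilon> > 0 \<Longrightarrow> \<exists>n. \<forall>z\<in>F. dist ((f ^^ n) z) (p z) < \<epsilon>"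
    and pX: "p x \<in> X" and x: "x \<in> X" and f: "f ` X \<subseteq> X" "continuous_on X f"
  shows "p ((f ^^ k) x) = (f ^^ k) (p x)"
proof -
  have "dist (p ((f ^^ k) x)) ((f ^^ k) (p x)) < \<epsilon>" if e: "\<epsilon> > 0" for \<epsilon>
  proof -
    have "continuous_on X (f ^^ k)" using funpow_cont[OF f] .
    then obtain d where d: "d > 0" "\<forall>x'\<in>X. dist x' (p x) < d \<longrightarrow> dist ((f ^^ k) x') ((f ^^ k) (p x)) < \<epsilon>/2"
      using pX e unfolding continuous_on_iff by (meson half_gt_zero)
    have FX: "{x, (f ^^ k) x} \<subseteq> X" using x orbit_in[OF f(1) x] by blast
    obtain n where n: "\<forall>z\<in>{x, (f ^^ k) x}. dist ((f ^^ n) z) (p z) < min d (\<epsilon>/2)"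
      using approx[OF _ FX] d e by (metis finite.emptyI finite.insertI min_less_iff_conj half_gt_zero)
    have "(f ^^ n) x \<in> X" using orbit_in[OF f(1) x] .
    then have a: "dist ((f ^^ k) ((f ^^ n) x)) ((f ^^ k) (p x)) < \<epsilon>/2" using d n by simp
    have comm: "(f ^^ k) ((f ^^ n) x) = (f ^^ n) ((f ^^ k) x)"
      by (metis add.commute comp_apply funpow_add)
    have b: "dist ((f ^^ n) ((f ^^ k) x)) (p ((f ^^ k) x)) < \<epsilon>/2" using n by simp
    show ?thesis using a b comm dist_triangle_half_l[of "p ((f ^^ k) x)" "(f ^^ n) ((f ^^ k) x)" \<epsilon> "(f ^^ k) (p x)"]
      by (simp add: dist_commute)
  qed
  then show ?thesis by (metis dist_pos_lt less_irrefl)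
qed


lemma limit_residue:
  fixes X :: "'a::metric_space set"
  assumes Q: "\<forall>N F \<epsilon>. finite F \<longrightarrow> F \<subseteq> X \<longrightarrow> \<epsilon> > 0 \<longrightarrow>
        (\<exists>n\<ge>N. n mod L = i \<and> (\<forall>z\<in>F. dist ((f ^^ n) z) (p z) < \<epsilon>))"
    and L: "(L::nat) > 0" and z: "z \<in> X"
    and lim: "(\<lambda>k. (f ^^ (L * k + i)) z) \<longlonglongrightarrow> l"
  shows "p z = l"
proof -
  have "dist (p z) l < \<epsilon>" if e: "\<epsilon> > 0" for \<epsilon>
  proof -
    obtain K where K: "\<forall>k\<ge>K. dist ((f ^^ (L * k + i)) z) l < \<epsilon>/2"
      using tendstoD[OF lim, of "\<epsilon>/2"] e unfolding eventually_sequentially by auto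
    have e2: "\<epsilon>/2 > 0" using e by simp
    obtain n where n: "n \<ge> L * K" "n mod L = i" "dist ((f ^^ n) z) (p z) < \<epsilon>/2"
      using Q[rule_format, of "{z}" "\<epsilon>/2" "L * K"] z e2 by auto
    have "(L * K) div L \<le> n div L" using n(1) by (rule div_le_mono)
    then have Kn: "K \<le> n div L" using L by simp
    have eqn: "L * (n div L) + i = n" using n(2) mult_div_mod_eq[of L n] by simp
    have "dist ((f ^^ (L * (n div L) + i)) z) l < \<epsilon>/2" using K Kn by blast
    then have "dist ((f ^^ n) z) l < \<epsilon>/2" unfolding eqn .
    then show ?thesis using n(3) dist_triangle_half_l[of "p z" "(f ^^ n) z" \<epsilon> l]
      by (simp add: dist_commute)
  qed
  then show ?thesis by (metis dist_pos_lt less_irrefl)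
qed

theorem theorem4p4:
  fixes X :: "'a::metric_space set" and f :: "'a \<Rightarrow> 'a" and m :: nat
  assumes "compact X" and "countable X"
    and "f ` X \<subseteq> X" and "continuous_on X f"
    and "transitive_system X f"
    and "\<forall>x\<in>X. x islimpt X \<longrightarrow> finite (omega_limit f x) \<and> card (omega_limit f x) \<le> m"
  shows "countable (ellis_semigroup X f)"
proof -
  note X = assms(1,3,4)
  obtain x0 where x0: "x0 \<in> X" "closure {(f ^^ n) x0 | n. True} = closure X"
    using assms(5) unfolding transitive_system_def by blast
  define Orb where "Orb = {(f ^^ n) x0 | n. True}"
  have OrbX: "Orb \<subseteq> X" unfolding Orb_def using orbit_in[OF assms(3) x0(1)] by blast
  define A where "A = {x\<in>X. x islimpt X}"
  define L :: nat where "L = fact m"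
  have L: "L > 0" unfolding L_def by simp
  have XO: "\<exists>k. z = (f ^^ k) x0" if "z \<in> X" "z \<notin> A" for z
  proof -
    have "z \<in> closure Orb" using x0(2) that(1) closure_subset unfolding Orb_def by blast
    moreover have "\<not> z islimpt Orb" using that OrbX islimpt_subset unfolding A_def by blast
    ultimately have "z \<in> Orb" unfolding closure_def by blast
    then show ?thesis unfolding Orb_def by blast
  qed
  have conv: "\<exists>l\<in>X. (\<lambda>k. (f ^^ (L * k)) z) \<longlonglongrightarrow> l" if "z \<in> A" for z
    using omega_conv[OF X _, of z m] that assms(6) unfolding A_def L_def by blast
  define hh where "hh z = (SOME l. l \<in> X \<and> (\<lambda>k. (f ^^ (L * k)) z) \<longlonglongrightarrow> l)" for z
  have hh: "hh z \<in> X" "(\<lambda>k. (f ^^ (L * k)) z) \<longlonglongrightarrow> hh z" if "z \<in> A" for z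
    using someI_ex[OF conv[OF that, unfolded Bex_def]] unfolding hh_def by blast+
  have hhi: "(\<lambda>k. (f ^^ (L * k + i)) z) \<longlonglongrightarrow> (f ^^ i) (hh z)" if "z \<in> A" for z i
  proof -
    have zX: "z \<in> X" using that unfolding A_def by blast
    have "(\<lambda>k. (f ^^ i) ((f ^^ (L * k)) z)) \<longlonglongrightarrow> (f ^^ i) (hh z)"
      using continuous_on_tendsto_compose[OF funpow_cont[OF assms(3,4)] hh(2)[OF that] hh(1)[OF that]]
        orbit_in[OF assms(3) zX] by simp
    moreover have "(f ^^ i) ((f ^^ (L * k)) z) = (f ^^ (L * k + i)) z" for k
      by (metis add.commute comp_apply funpow_add)
    ultimately show ?thesis by simp
  qed
  define \<Phi> where "\<Phi> = (\<lambda>(y, i). (\<lambda>z. if z \<in> X then (if z \<in> A then (f ^^ i) (hh z)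
      else (f ^^ (SOME k. z = (f ^^ k) x0)) y) else undefined))"
  have sub: "ellis_semigroup X f \<subseteq> range (\<lambda>n. restrict (f ^^ n) X) \<union> \<Phi> ` (X \<times> {..<L})"
  proof
    fix p assume p: "p \<in> ellis_semigroup X f"
    note pP = ellis_approx(1)[OF p]
    have approx: "\<And>F \<epsilon>. finite F \<Longrightarrow> F \<subseteq> X \<Longrightarrow> \<epsilon> > 0 \<Longrightarrow> \<exists>n. \<forall>z\<in>F. dist ((f ^^ n) z) (p z) < \<epsilon>"
      by (rule ellis_approx(2)[OF p])
    have pext: "p \<in> extensional X" using pP by (simp add: PiE_def)
    have R: "(\<exists>n. p = restrict (f ^^ n) X) \<or>
      (\<exists>i<L. \<forall>N F \<epsilon>. finite F \<longrightarrow> F \<subseteq> X \<longrightarrow> \<epsilon> > 0 \<longrightarrow>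
        (\<exists>n\<ge>N. n mod L = i \<and> (\<forall>z\<in>F. dist ((f ^^ n) z) (p z) < \<epsilon>)))"
      by (rule reduction[OF _ pext L], rule approx)
    show "p \<in> range (\<lambda>n. restrict (f ^^ n) X) \<union> \<Phi> ` (X \<times> {..<L})"
    proof (cases "\<exists>n. p = restrict (f ^^ n) X")
      case True
      then obtain n where "p = restrict (f ^^ n) X" by blast
      then have "p \<in> range (\<lambda>n. restrict (f ^^ n) X)" by simp
      then show ?thesis by (rule UnI1)
    next
      case False
      have R2: "\<exists>i<L. \<forall>N F \<epsilon>. finite F \<longrightarrow> F \<subseteq> X \<longrightarrow> \<epsilon> > 0 \<longrightarrow>
        (\<exists>n\<ge>N. n mod L = i \<and> (\<forall>z\<in>F. dist ((f ^^ n) z) (p z) < \<epsilon>))" (is "?R2")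
      proof (rule disjE[OF R])
        assume "\<exists>n. p = restrict (f ^^ n) X"
        then show ?R2 using False by contradiction
      next
        assume "?R2" then show ?R2 .
      qed
      then obtain i where iQ: "i < L \<and> (\<forall>N F \<epsilon>. finite F \<longrightarrow> F \<subseteq> X \<longrightarrow> \<epsilon> > 0 \<longrightarrow>
        (\<exists>n\<ge>N. n mod L = i \<and> (\<forall>z\<in>F. dist ((f ^^ n) z) (p z) < \<epsilon>)))" ..
      note i = conjunct1[OF iQ] and Q = conjunct2[OF iQ]
      have px0: "p x0 \<in> X" using pP x0(1) by (auto simp: PiE_iff)
      have "p = \<Phi> (p x0, i)"
      proof (rule ext)
        fix z
        show "p z = \<Phi> (p x0, i) z"
        proof (cases "z \<in> X")
          case False
          then have "p z = undefined" by (rule extensional_arb[OF pext])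
          moreover have "\<Phi> (p x0, i) z = undefined" using False unfolding \<Phi>_def by simp
          ultimately show ?thesis by simp
        next
          case zX: True
          show ?thesis
          proof (cases "z \<in> A")
            case True
            have lim: "(\<lambda>k. (f ^^ (L * k + i)) z) \<longlonglongrightarrow> (f ^^ i) (hh z)" by (rule hhi[OF True])
            have "p z = (f ^^ i) (hh z)" by (rule limit_residue[OF Q L zX lim])
            moreover have "\<Phi> (p x0, i) z = (f ^^ i) (hh z)" using zX True unfolding \<Phi>_def by simp
            ultimately show ?thesis by simp
          next
            case False
            define k where "k = (SOME k. z = (f ^^ k) x0)"
            have zk: "z = (f ^^ k) x0" unfolding k_def by (rule someI_ex[OF XO[OF zX False]])
            have "p ((f ^^ k) x0) = (f ^^ k) (p x0)"
              by (rule commute_orbit[where p=p and x=x0 and k=k and X=X and f=f, OF _ px0 x0(1) assms(3,4)],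
                  rule approx)
            then have "p z = (f ^^ k) (p x0)" using zk by simp
            moreover have "\<Phi> (p x0, i) z = (f ^^ k) (p x0)" using zX False unfolding \<Phi>_def k_def by simp
            ultimately show ?thesis by simp
          qed
        qed
      qed
      moreover have "(p x0, i) \<in> X \<times> {..<L}" using px0 i by simp
      ultimately have "p \<in> \<Phi> ` (X \<times> {..<L})" by (rule image_eqI)
      then show ?thesis by (rule UnI2)
    qed
  qed
  have "countable (X \<times> {..<L})" using assms(2) by (simp add: countable_SIGMA)
  then have "countable (range (\<lambda>n. restrict (f ^^ n) X) \<union> \<Phi> ` (X \<times> {..<L}))" by simp
  then show ?thesis using sub countable_subset by blast
qed

end
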